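(* Let $E$ be a nonzero real Banach space and $S\colon E\rightrightarrows E^*$ be closed and monotone. Then the following are equivalent: (a) $S$ is quasidense; (b) for all $w\in E$, all nonempty $w(E^*,E)$-compact convex subsets $\widetilde W$ of $E^*$ and all $\eta>0$, there exists $(s,s^* )\in G(S)$ such that $\tfrac12\|s-w\|^2+\tfrac12\operatorname{dist}(s^*,\widetilde W)^2+\max_{x^*\in\widetilde W}\langle s-w,s^*-x^*\rangle<\eta$.
   Context: For a multifunction $S\colon E\rightrightarrows E^*$ with nonempty graph $G(S)$: closed means $G(S)$ norm-closed; monotone means $\langle s-t,s^*-t^*\rangle\ge0$ on $G(S)$; quasidense means for every $(x,x^* )\in E\times E^*$, $\inf_{(s,s^* )\in G(S)}[\tfrac12\|s-x\|^2+\tfrac12\|s^*-x^*\|^2+\langle s-x,s^*-x^*\rangle]\le0$. $\operatorname{dist}$ is norm distance in $E^*$. *)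

theory Defs
  imports "HOL-Analysis.Analysis"
begin

(* The dual E* of a real Banach space E is modelled as the type 'a =>L real of
  bounded linear functionals; the pairing is blinfun_apply.  A multifunction S is
  identified with its graph G(S). *)

definition weak_star_topology :: "('a::real_normed_vector \<Rightarrow>\<^sub>L real) topology" where
  "weak_star_topology =
     topology_generated_by {{f. blinfun_apply f x \<in> U} | x U. open (U :: real set)}"

definition monotone_graph :: "('a::real_normed_vector \<times> ('a \<Rightarrow>\<^sub>L real)) set \<Rightarrow> bool" where
  "monotone_graph G \<longleftrightarrow>
     (\<forall>(s, s') \<in> G. \<forall>(t, t') \<in> G. blinfun_apply (s' - t') (s - t) \<ge> 0)"

definition quasidense :: "('a::real_normed_vector \<times> ('a \<Rightarrow>\<^sub>L real)) set \<Rightarrow> bool" where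
  "quasidense G \<longleftrightarrow>
     (\<forall>x x'. (INF p\<in>G. (norm (fst p - x))\<^sup>2 / 2 + (norm (snd p - x'))\<^sup>2 / 2
                        + blinfun_apply (snd p - x') (fst p - x)) \<le> 0)"

end

theory Submission
  imports Defs
begin

lemma ws_topspace [simp]: "topspace (weak_star_topology :: ('a::real_normed_vector \<Rightarrow>\<^sub>L real) topology) = UNIV"
proof -
  have "UNIV \<in> {{f::'a \<Rightarrow>\<^sub>L real. blinfun_apply f x \<in> U} | x U. open (U :: real set)}"
    by (rule CollectI, rule exI[of _ 0], rule exI[of _ UNIV]) simp
  then have "\<Union>{{f::'a \<Rightarrow>\<^sub>L real. blinfun_apply f x \<in> U} | x U. open (U :: real set)} = UNIV"
    by blast
  then show ?thesis unfolding weak_star_topology_def topology_generated_by_topspace .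
qed

lemma ws_open_eval: "open U \<Longrightarrow> openin weak_star_topology {f::'a::real_normed_vector \<Rightarrow>\<^sub>L real. blinfun_apply f x \<in> U}"
  unfolding weak_star_topology_def openin_topology_generated_by_iff
  by (rule generate_topology_on.Basis) blast

lemma ws_cont_eval: "continuous_map weak_star_topology euclideanreal (\<lambda>f::'a::real_normed_vector \<Rightarrow>\<^sub>L real. blinfun_apply f x)"
proof -
  have "\<forall>U. openin euclideanreal U \<longrightarrow> openin weak_star_topology {f \<in> topspace weak_star_topology. blinfun_apply f x \<in> U}"
    using ws_open_eval[of _ x] by (simp add: open_openin[symmetric])
  then show ?thesis unfolding continuous_map_def by simp
qed

lemma ws_compact_eval: "compactin weak_star_topology K \<Longrightarrow> compact ((\<lambda>f::'a::real_normed_vector \<Rightarrow>\<^sub>L real. blinfun_apply f x) ` K)"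
proof -
  assume "compactin weak_star_topology K"
  then have "compactin euclideanreal ((\<lambda>f::'a::real_normed_vector \<Rightarrow>\<^sub>L real. blinfun_apply f x) ` K)"
    by (rule image_compactin[OF _ ws_cont_eval])
  then show ?thesis by simp
qed

lemma ws_closed_ge: "closedin weak_star_topology {f::'a::real_normed_vector \<Rightarrow>\<^sub>L real. c \<le> blinfun_apply f x}"
proof -
  have e: "topspace weak_star_topology - {f::'a \<Rightarrow>\<^sub>L real. c \<le> blinfun_apply f x} = {f. blinfun_apply f x \<in> {..<c}}"
    by (auto simp: not_le)
  have "openin weak_star_topology {f::'a \<Rightarrow>\<^sub>L real. blinfun_apply f x \<in> {..<c}}"
    by (rule ws_open_eval) simp
  then show ?thesis unfolding closedin_def e by simp
qed

lemma ws_closed_le: "closedin weak_star_topology {f::'a::real_normed_vector \<Rightarrow>\<^sub>L real. blinfun_apply f x \<le> c}"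
proof -
  have e: "topspace weak_star_topology - {f::'a \<Rightarrow>\<^sub>L real. blinfun_apply f x \<le> c} = {f. blinfun_apply f x \<in> {c<..}}"
    by (auto simp: not_le)
  have "openin weak_star_topology {f::'a \<Rightarrow>\<^sub>L real. blinfun_apply f x \<in> {c<..}}"
    by (rule ws_open_eval) simp
  then show ?thesis unfolding closedin_def e by simp
qed

lemma ws_attain:
  assumes "compactin weak_star_topology K" "K \<noteq> {}" "\<forall>z\<in>K. C - blinfun_apply z (v::'a::real_normed_vector) < c"
  shows "\<exists>m<c. \<forall>z\<in>K. C - blinfun_apply z v \<le> m"
proof -
  have "compact ((\<lambda>f. blinfun_apply f v) ` K)" by (rule ws_compact_eval[OF assms(1)])
  moreover have "(\<lambda>f. blinfun_apply f v) ` K \<noteq> {}" using assms(2) by simp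
  ultimately obtain y where "y \<in> (\<lambda>f. blinfun_apply f v) ` K" "\<forall>y'\<in>(\<lambda>f. blinfun_apply f v) ` K. y \<le> y'"
    using compact_attains_inf by blast
  then obtain z0 where z0: "z0 \<in> K" "\<forall>z\<in>K. blinfun_apply z0 v \<le> blinfun_apply z v"
    by auto
  have "C - blinfun_apply z0 v < c" using z0(1) assms(3) by blast
  moreover have "\<forall>z\<in>K. C - blinfun_apply z v \<le> C - blinfun_apply z0 v" using z0(2) by auto
  ultimately show ?thesis by blast
qed

lemma ws_bounded:
  assumes "compactin weak_star_topology K"
  shows "\<exists>B. \<forall>z\<in>K. \<bar>blinfun_apply z (v::'a::real_normed_vector)\<bar> \<le> B"
proof -
  have "bounded ((\<lambda>f. blinfun_apply f v) ` K)"
    using ws_compact_eval[OF assms] compact_imp_bounded by blast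
  then obtain B where "\<forall>y\<in>(\<lambda>f. blinfun_apply f v) ` K. norm y \<le> B" by (auto simp: bounded_iff)
  then show ?thesis by auto
qed

lemma ws_norm_bounded:
  fixes W :: "('a::banach \<Rightarrow>\<^sub>L real) set"
  assumes cpt: "compactin weak_star_topology W"
  shows "\<exists>R. \<forall>z\<in>W. norm z \<le> R"
proof -
  define F where "F n = {x::'a. \<forall>z\<in>W. \<bar>blinfun_apply z x\<bar> \<le> real n}" for n
  have clF: "closed (F n)" for n
  proof -
    have "F n = (\<Inter>z\<in>W. {x. \<bar>blinfun_apply z x\<bar> \<le> real n})" unfolding F_def by blast
    moreover have "closed {x. \<bar>blinfun_apply z x\<bar> \<le> real n}" for z
      by (rule closed_Collect_le[OF continuous_on_rabs[OF linear_continuous_on[OF blinfun.bounded_linear_right]] continuous_on_const])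
    ultimately show ?thesis by auto
  qed
  have cov: "\<Union>(range F) = UNIV"
  proof -
    have "x \<in> \<Union>(range F)" for x
    proof -
      obtain B where B: "\<forall>z\<in>W. \<bar>blinfun_apply z x\<bar> \<le> B" using ws_bounded[OF cpt] by blast
      have "B \<le> real (nat \<lceil>B\<rceil>)" by linarith
      have "\<forall>z\<in>W. \<bar>blinfun_apply z x\<bar> \<le> real (nat \<lceil>B\<rceil>)"
      proof
        fix z assume "z \<in> W"
        then have "\<bar>blinfun_apply z x\<bar> \<le> B" using B by blast
        then show "\<bar>blinfun_apply z x\<bar> \<le> real (nat \<lceil>B\<rceil>)" using \<open>B \<le> real (nat \<lceil>B\<rceil>)\<close> by linarith
      qed
      then have "x \<in> F (nat \<lceil>B\<rceil>)" unfolding F_def by simp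
      then show ?thesis by blast
    qed
    then show ?thesis by blast
  qed
  have "\<exists>n. interior (F n) \<noteq> {}"
  proof (rule ccontr)
    assume "\<not> ?thesis"
    then have ni: "\<And>n. interior (F n) = {}" by simp
    have h1: "completely_metrizable_space (euclidean :: 'a topology)" by (rule completely_metrizable_space_euclidean)
    have h2: "countable (range F)" by simp
    have h3: "closedin euclidean T \<and> euclidean interior_of T = {}" if T_in: "T \<in> range F" for T
    proof -
      obtain m where "T = F m" using T_in by blast
      moreover have "closedin euclidean (F m)" using clF[of m] closed_closedin by blast
      ultimately show ?thesis using ni[of m] by simp
    qed
    have "euclidean interior_of \<Union>(range F) = {}"
      by (rule Baire_category_alt[OF disjI1[OF h1] h2 h3])
    then show False using cov by simp
  qed
  then obtain n x0 where "x0 \<in> interior (F n)" by blast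
  then obtain r where r: "r > 0" "ball x0 r \<subseteq> F n"
  proof -
    obtain r where "r > 0" "ball x0 r \<subseteq> interior (F n)"
      using open_contains_ball_eq[OF open_interior] \<open>x0 \<in> interior (F n)\<close> by blast
    then show ?thesis using interior_subset[of "F n"] that by blast
  qed
  have x0F: "x0 \<in> F n" using r by auto
  have "norm z \<le> 4 * real n / r" if z: "z \<in> W" for z
  proof (rule norm_blinfun_bound)
    show "0 \<le> 4 * real n / r" using r by simp
    fix x :: 'a
    show "norm (blinfun_apply z x) \<le> 4 * real n / r * norm x"
    proof (cases "x = 0")
      case True then show ?thesis by simp
    next
      case False
      define y where "y = x0 + (r / (2 * norm x)) *\<^sub>R x"
      have "dist x0 y = r / 2" using False r unfolding y_def dist_norm by (simp add: field_simps)
      then have "y \<in> F n" using r by auto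
      then have y1: "\<bar>blinfun_apply z y\<bar> \<le> real n" using z unfolding F_def by blast
      have y2: "\<bar>blinfun_apply z x0\<bar> \<le> real n" using x0F z unfolding F_def by blast
      have "blinfun_apply z y - blinfun_apply z x0 = (r / (2 * norm x)) * blinfun_apply z x"
        unfolding y_def by (simp add: blinfun.add_right blinfun.scaleR_right)
      then have eq: "blinfun_apply z x = (2 * norm x / r) * (blinfun_apply z y - blinfun_apply z x0)"
        using False r by (simp add: field_simps)
      have "\<bar>blinfun_apply z y - blinfun_apply z x0\<bar> \<le> 2 * real n" using y1 y2 by linarith
      then have "(2 * norm x / r) * \<bar>blinfun_apply z y - blinfun_apply z x0\<bar> \<le> (2 * norm x / r) * (2 * real n)"
        using r by (intro mult_left_mono) simp_all
      moreover have "\<bar>blinfun_apply z x\<bar> = (2 * norm x / r) * \<bar>blinfun_apply z y - blinfun_apply z x0\<bar>"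
        unfolding eq abs_mult using r by simp
      ultimately have "\<bar>blinfun_apply z x\<bar> \<le> (2 * norm x / r) * (2 * real n)" by simp
      then show ?thesis by (simp add: field_simps)
    qed
  qed
  then show ?thesis by blast
qed

lemma comb_lt:
  fixes a b c t :: real
  assumes "0 \<le> t" "t \<le> 1" "a < c" "b < c"
  shows "t * a + (1 - t) * b < c"
proof (cases "t = 0")
  case True then show ?thesis using assms by simp
next
  case False
  then have "t * a < t * c" using assms by (intro mult_strict_left_mono) auto
  moreover have "(1 - t) * b \<le> (1 - t) * c" using assms by (intro mult_left_mono) auto
  ultimately have "t * a + (1 - t) * b < t * c + (1 - t) * c" by linarith
  also have "\<dots> = c" by (simp add: algebra_simps)
  finally show ?thesis .
qed

lemma blinfun_comb_apply:
  "blinfun_apply ((1 - r) *\<^sub>R z1 + r *\<^sub>R z2) v = (1 - r) * blinfun_apply z1 v + r * blinfun_apply z2 v"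
  by (simp add: blinfun.add_left blinfun.scaleR_left)

lemma two_minimax:
  fixes v1 v2 :: "'a::real_normed_vector" and W :: "('a \<Rightarrow>\<^sub>L real) set"
  assumes cpt: "compactin weak_star_topology W" and cvx: "convex W"
    and H: "\<forall>z\<in>W. C1 - blinfun_apply z v1 < c \<or> C2 - blinfun_apply z v2 < c"
  shows "\<exists>t. 0 \<le> t \<and> t \<le> 1 \<and> (\<forall>z\<in>W. t * (C1 - blinfun_apply z v1) + (1 - t) * (C2 - blinfun_apply z v2) < c)"
proof (rule ccontr)
  define g1 where "g1 z = C1 - blinfun_apply z v1" for z
  define g2 where "g2 z = C2 - blinfun_apply z v2" for z
  define h where "h t z = t * g1 z + (1 - t) * g2 z" for t z
  assume "\<not> ?thesis"
  then have N: "\<And>t. 0 \<le> t \<Longrightarrow> t \<le> 1 \<Longrightarrow> \<exists>z\<in>W. c \<le> h t z"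
    unfolding h_def g1_def g2_def by (meson not_less)
  define A where "A = {z\<in>W. c \<le> g1 z}"
  define B where "B = {z\<in>W. c \<le> g2 z}"
  have AB: "z \<in> W \<Longrightarrow> g1 z < c \<or> g2 z < c" for z using H unfolding g1_def g2_def by blast
  have F1: "z \<in> A \<or> z \<in> B" if "0 \<le> t" "t \<le> 1" "z \<in> W" "c \<le> h t z" for t z
  proof (rule ccontr)
    assume "\<not> (z \<in> A \<or> z \<in> B)"
    then have "g1 z < c" "g2 z < c" using that(3) unfolding A_def B_def by auto
    then have "h t z < c" unfolding h_def using comb_lt that(1,2) by blast
    then show False using that(4) by simp
  qed
  have g1c: "g1 ((1 - r) *\<^sub>R z1 + r *\<^sub>R z2) = (1 - r) * g1 z1 + r * g1 z2" for r z1 z2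
    unfolding g1_def blinfun_comb_apply by (simp add: algebra_simps)
  have g2c: "g2 ((1 - r) *\<^sub>R z1 + r *\<^sub>R z2) = (1 - r) * g2 z1 + r * g2 z2" for r z1 z2
    unfolding g2_def blinfun_comb_apply by (simp add: algebra_simps)
  have F2: False if "c \<le> h t z1" "c \<le> h t z2" "z1 \<in> A" "z2 \<in> B" for t z1 z2
  proof -
    have z1: "z1 \<in> W" "c \<le> g1 z1" using that(3) unfolding A_def by auto
    have z2: "z2 \<in> W" "c \<le> g2 z2" using that(4) unfolding B_def by auto
    have b0: "g2 z1 < c" using AB[OF z1(1)] z1(2) by linarith
    have a1: "g1 z2 < c" using AB[OF z2(1)] z2(2) by linarith
    define p0 where "p0 = g1 z1 - g2 z1"
    define p1 where "p1 = g1 z2 - g2 z2"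
    have p0: "p0 > 0" using z1 b0 unfolding p0_def by linarith
    have p1: "p1 < 0" using z2 a1 unfolding p1_def by linarith
    define r where "r = p0 / (p0 - p1)"
    have r0: "0 < r" using p0 p1 unfolding r_def by simp
    have r1: "r < 1" using p0 p1 unfolding r_def by simp
    have rr: "r * (p0 - p1) = p0" using p0 p1 unfolding r_def by simp
    define zr where "zr = (1 - r) *\<^sub>R z1 + r *\<^sub>R z2"
    have zrW: "zr \<in> W" unfolding zr_def using convexD[OF cvx z1(1) z2(1), of "1 - r" r] r0 r1 by simp
    have "g1 zr - g2 zr = (1 - r) * p0 + r * p1"
      unfolding zr_def g1c g2c p0_def p1_def by (simp add: algebra_simps)
    also have "\<dots> = p0 - r * (p0 - p1)" by (simp add: algebra_simps)
    also have "\<dots> = 0" using rr by simp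
    finally have eq: "g1 zr = g2 zr" by simp
    have "h t zr = (1 - r) * h t z1 + r * h t z2"
      unfolding h_def zr_def g1c g2c by (simp add: algebra_simps)
    moreover have "(1 - r) * h t z1 + r * h t z2 \<ge> (1 - r) * c + r * c"
      using that(1,2) r0 r1 by (intro add_mono mult_left_mono) auto
    ultimately have "h t zr \<ge> c" by (simp add: algebra_simps)
    moreover have "h t zr = g1 zr" unfolding h_def eq by (simp add: algebra_simps)
    ultimately have "c \<le> g1 zr" "c \<le> g2 zr" using eq by auto
    then show False using AB[OF zrW] by linarith
  qed
  have cA: "compactin weak_star_topology A"
  proof -
    have "A = {f. blinfun_apply f v1 \<le> C1 - c} \<inter> W" unfolding A_def g1_def by auto
    then show ?thesis using closed_Int_compactin[OF ws_closed_le cpt] by simp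
  qed
  have cB: "compactin weak_star_topology B"
  proof -
    have "B = {f. blinfun_apply f v2 \<le> C2 - c} \<inter> W" unfolding B_def g2_def by auto
    then show ?thesis using closed_Int_compactin[OF ws_closed_le cpt] by simp
  qed
  have OPEN: "\<exists>d>0. \<forall>t'. \<bar>t' - t\<bar> < d \<longrightarrow> (\<forall>z\<in>D. h t' z < c)"
    if D: "compactin weak_star_topology D" and Dt: "\<forall>z\<in>D. h t z < c" for D t
  proof (cases "D = {}")
    case True then show ?thesis by (intro exI[of _ 1]) auto
  next
    case False
    have hform: "h t z = (t * C1 + (1 - t) * C2) - blinfun_apply z (t *\<^sub>R v1 + (1 - t) *\<^sub>R v2)" for z
      unfolding h_def g1_def g2_def blinfun.add_right blinfun.scaleR_right real_scaleR_def by (simp add: algebra_simps)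
    obtain m where m: "m < c" "\<forall>z\<in>D. h t z \<le> m"
      using ws_attain[OF D False, of "t * C1 + (1 - t) * C2" "t *\<^sub>R v1 + (1 - t) *\<^sub>R v2" c] Dt
      unfolding hform by blast
    obtain B1 where B1: "\<forall>z\<in>D. \<bar>blinfun_apply z v1\<bar> \<le> B1" using ws_bounded[OF D] by blast
    obtain B2 where B2: "\<forall>z\<in>D. \<bar>blinfun_apply z v2\<bar> \<le> B2" using ws_bounded[OF D] by blast
    define K where "K = \<bar>C1\<bar> + \<bar>C2\<bar> + B1 + B2"
    have Kb: "\<bar>g1 z - g2 z\<bar> \<le> K" if "z \<in> D" for z
      using B1 B2 that unfolding K_def g1_def g2_def by fastforce
    have K0: "0 \<le> K" using Kb False by (meson abs_ge_zero all_not_in_conv order_trans)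
    define d where "d = (c - m) / (K + 1)"
    have d0: "d > 0" unfolding d_def using m K0 by simp
    show ?thesis
    proof (intro exI[of _ d] conjI allI impI ballI)
      fix t' z assume tt: "\<bar>t' - t\<bar> < d" and z: "z \<in> D"
      have "h t' z = h t z + (t' - t) * (g1 z - g2 z)" unfolding h_def by (simp add: algebra_simps)
      also have "\<dots> \<le> m + \<bar>t' - t\<bar> * K"
      proof -
        have "(t' - t) * (g1 z - g2 z) \<le> \<bar>t' - t\<bar> * \<bar>g1 z - g2 z\<bar>" by (metis abs_ge_self abs_mult)
        also have "\<dots> \<le> \<bar>t' - t\<bar> * K" using Kb[OF z] by (intro mult_left_mono) auto
        moreover have "h t z \<le> m" using m(2) z by blast
        ultimately show ?thesis by linarith
      qed
      also have "\<dots> < c"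
      proof -
        have "\<bar>t' - t\<bar> * K \<le> \<bar>t' - t\<bar> * (K + 1)" by (intro mult_left_mono) auto
        also have "\<dots> < d * (K + 1)" using tt K0 by (intro mult_strict_right_mono) auto
        also have "\<dots> = c - m" unfolding d_def using K0 by simp
        finally show ?thesis by linarith
      qed
      finally show "h t' z < c" .
    qed (rule d0)
  qed
  define TA where "TA = {t\<in>{0..1}. \<forall>z\<in>B. h t z < c}"
  define TB where "TB = {t\<in>{0..1}. \<forall>z\<in>A. h t z < c}"
  have cover: "t \<in> TA \<or> t \<in> TB" if t01: "t \<in> {0..1}" for t
  proof (rule ccontr)
    assume "\<not> (t \<in> TA \<or> t \<in> TB)"
    then obtain z1 z2 where "z1 \<in> A" "c \<le> h t z1" "z2 \<in> B" "c \<le> h t z2"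
      using t01 unfolding TA_def TB_def by (auto simp: not_less)
    then show False using F2 by blast
  qed
  have disj: False if "t \<in> TA" "t \<in> TB" for t
  proof -
    have t01: "0 \<le> t" "t \<le> 1" using that(1) unfolding TA_def by auto
    obtain z where z: "z \<in> W" "c \<le> h t z" using N[OF t01] by blast
    then have "z \<in> A \<or> z \<in> B" using F1 t01 by blast
    then show False using that z(2) unfolding TA_def TB_def by fastforce
  qed
  have oneA: "1 \<in> TA"
  proof -
    have "h 1 z < c" if "z \<in> B" for z
    proof -
      have "z \<in> W" "c \<le> g2 z" using that unfolding B_def by auto
      then have "g1 z < c" using AB by fastforce
      then show ?thesis unfolding h_def by simp
    qed
    then show ?thesis unfolding TA_def by auto
  qed
  have zeroB: "0 \<in> TB"
  proof -
    have "h 0 z < c" if "z \<in> A" for z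
    proof -
      have "z \<in> W" "c \<le> g1 z" using that unfolding A_def by auto
      then have "g2 z < c" using AB by fastforce
      then show ?thesis unfolding h_def by simp
    qed
    then show ?thesis unfolding TB_def by auto
  qed
  have "\<forall>t\<in>TA. \<exists>d>0. \<forall>t'. \<bar>t' - t\<bar> < d \<longrightarrow> (\<forall>z\<in>B. h t' z < c)"
    using OPEN[OF cB] unfolding TA_def by blast
  then obtain dA where dA: "\<And>t. t \<in> TA \<Longrightarrow> dA t > 0 \<and> (\<forall>t'. \<bar>t' - t\<bar> < dA t \<longrightarrow> (\<forall>z\<in>B. h t' z < c))"
    by metis
  have "\<forall>t\<in>TB. \<exists>d>0. \<forall>t'. \<bar>t' - t\<bar> < d \<longrightarrow> (\<forall>z\<in>A. h t' z < c)"
    using OPEN[OF cA] unfolding TB_def by blast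
  then obtain dB where dB: "\<And>t. t \<in> TB \<Longrightarrow> dB t > 0 \<and> (\<forall>t'. \<bar>t' - t\<bar> < dB t \<longrightarrow> (\<forall>z\<in>A. h t' z < c))"
    by metis
  define U where "U = (\<Union>t\<in>TA. ball t (dA t))"
  define V where "V = (\<Union>t\<in>TB. ball t (dB t))"
  have oU: "open U" unfolding U_def by auto
  have oV: "open V" unfolding V_def by auto
  have UA: "x \<in> TA" if xU: "x \<in> U" "x \<in> {0..1}" for x
  proof -
    obtain t where t: "t \<in> TA" "x \<in> ball t (dA t)" using xU(1) unfolding U_def by blast
    then have "\<bar>x - t\<bar> < dA t" by (simp add: dist_real_def abs_minus_commute)
    then show ?thesis using dA[OF t(1)] xU(2) unfolding TA_def by blast
  qed
  have VB: "x \<in> TB" if xU: "x \<in> V" "x \<in> {0..1}" for x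
  proof -
    obtain t where t: "t \<in> TB" "x \<in> ball t (dB t)" using xU(1) unfolding V_def by blast
    then have "\<bar>x - t\<bar> < dB t" by (simp add: dist_real_def abs_minus_commute)
    then show ?thesis using dB[OF t(1)] xU(2) unfolding TB_def by blast
  qed
  have "U \<inter> V \<inter> {0..1::real} = {}" using UA VB disj by blast
  moreover have "{0..1::real} \<subseteq> U \<union> V"
  proof
    fix x :: real assume x: "x \<in> {0..1}"
    show "x \<in> U \<union> V"
    proof (cases "x \<in> TA")
      case True then have "x \<in> ball x (dA x)" using dA by simp
      then show ?thesis unfolding U_def using True by blast
    next
      case False then have "x \<in> TB" using cover x by blast
      then have "x \<in> ball x (dB x)" using dB by simp
      then show ?thesis unfolding V_def using \<open>x \<in> TB\<close> by blast
    qed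
  qed
  ultimately have "U \<inter> {0..1} = {} \<or> V \<inter> {0..1} = {}"
    using connectedD[OF connected_Icc oU oV] by blast
  moreover have "1 \<in> U" using oneA dA[OF oneA] unfolding U_def by force
  moreover have "0 \<in> V" using zeroB dB[OF zeroB] unfolding V_def by force
  ultimately show False by auto
qed

lemma convex_eval_le: "convex {z::'a::real_normed_vector \<Rightarrow>\<^sub>L real. blinfun_apply z v \<le> k}"
  unfolding convex_def
  by (auto simp: blinfun.add_left blinfun.scaleR_left intro!: convex_bound_le)

lemma fin_minimax:
  fixes C :: "'i \<Rightarrow> real" and v :: "'i \<Rightarrow> 'a::real_normed_vector" and W :: "('a \<Rightarrow>\<^sub>L real) set"
  assumes "finite F" "F \<noteq> {}" "compactin weak_star_topology W" "convex W"
    "\<forall>z\<in>W. \<exists>i\<in>F. C i - blinfun_apply z (v i) < c"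
  shows "\<exists>l. (\<forall>i\<in>F. 0 \<le> l i) \<and> sum l F = 1 \<and> (\<forall>z\<in>W. (\<Sum>i\<in>F. l i * (C i - blinfun_apply z (v i))) < c)"
  using assms
proof (induct F arbitrary: W rule: finite_ne_induct)
  case (singleton j)
  show ?case by (rule exI[of _ "\<lambda>_. 1"]) (use singleton in auto)
next
  case (insert j F)
  define W' where "W' = {f. blinfun_apply f (v j) \<le> C j - c} \<inter> W"
  have cW': "compactin weak_star_topology W'"
    unfolding W'_def by (rule closed_Int_compactin[OF ws_closed_le insert.prems(1)])
  have vW': "convex W'" unfolding W'_def by (rule convex_Int[OF convex_eval_le insert.prems(2)])
  have "\<forall>z\<in>W'. \<exists>i\<in>F. C i - blinfun_apply z (v i) < c"
  proof
    fix z assume z: "z \<in> W'"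
    then obtain i where i: "i \<in> insert j F" "C i - blinfun_apply z (v i) < c"
      using insert.prems(3) unfolding W'_def by blast
    have "i \<noteq> j" using i z unfolding W'_def by auto
    then show "\<exists>i\<in>F. C i - blinfun_apply z (v i) < c" using i by blast
  qed
  then obtain mu where mu: "\<forall>i\<in>F. 0 \<le> mu i" "sum mu F = 1"
    "\<forall>z\<in>W'. (\<Sum>i\<in>F. mu i * (C i - blinfun_apply z (v i))) < c"
    using insert.hyps(4)[OF cW' vW'] by blast
  define C' where "C' = (\<Sum>i\<in>F. mu i * C i)"
  define v' where "v' = (\<Sum>i\<in>F. mu i *\<^sub>R v i)"
  have form: "(\<Sum>i\<in>F. mu i * (C i - blinfun_apply z (v i))) = C' - blinfun_apply z v'" for z
    unfolding C'_def v'_def blinfun.sum_right blinfun.scaleR_right real_scaleR_def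
    by (simp add: algebra_simps sum_subtractf sum_distrib_left)
  have "\<forall>z\<in>W. C' - blinfun_apply z v' < c \<or> C j - blinfun_apply z (v j) < c"
  proof
    fix z assume z: "z \<in> W"
    show "C' - blinfun_apply z v' < c \<or> C j - blinfun_apply z (v j) < c"
    proof (cases "z \<in> W'")
      case True then show ?thesis using mu(3) form by auto
    next
      case False then show ?thesis using z unfolding W'_def by auto
    qed
  qed
  then obtain t where t: "0 \<le> t" "t \<le> 1"
    "\<forall>z\<in>W. t * (C' - blinfun_apply z v') + (1 - t) * (C j - blinfun_apply z (v j)) < c"
    using two_minimax[OF insert.prems(1,2)] by blast
  define l where "l i = (if i = j then 1 - t else t * mu i)" for i
  have sF: "(\<Sum>i\<in>F. l i * g i) = t * (\<Sum>i\<in>F. mu i * g i)" for g :: "'i \<Rightarrow> real"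
  proof -
    have "(\<Sum>i\<in>F. l i * g i) = (\<Sum>i\<in>F. t * (mu i * g i))"
      using insert.hyps(3) unfolding l_def by (intro sum.cong) auto
    then show ?thesis by (simp add: sum_distrib_left)
  qed
  show ?case
  proof (intro exI[of _ l] conjI ballI)
    fix i assume "i \<in> insert j F"
    then show "0 \<le> l i" using t mu(1) insert.hyps(3) unfolding l_def by auto
  next
    have "sum l F = t" using sF[of "\<lambda>_. 1"] mu(2) by simp
    then show "sum l (insert j F) = 1"
      using insert.hyps(1,3) unfolding l_def by simp
  next
    fix z assume z: "z \<in> W"
    have "(\<Sum>i\<in>insert j F. l i * (C i - blinfun_apply z (v i)))
          = l j * (C j - blinfun_apply z (v j)) + (\<Sum>i\<in>F. l i * (C i - blinfun_apply z (v i)))"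
      using insert.hyps(1,3) by simp
    also have "\<dots> = (1 - t) * (C j - blinfun_apply z (v j)) + t * (C' - blinfun_apply z v')"
    proof -
      have "l j = 1 - t" by (simp add: l_def)
      then show ?thesis using sF[of "\<lambda>i. C i - blinfun_apply z (v i)"] form[of z] by simp
    qed
    also have "\<dots> < c" using t(3) z by (simp add: algebra_simps)
    finally show "(\<Sum>i\<in>insert j F. l i * (C i - blinfun_apply z (v i))) < c" .
  qed
qed

lemma abs_blinfun_le: "\<bar>blinfun_apply (f::'a::real_normed_vector \<Rightarrow>\<^sub>L real) x\<bar> \<le> norm f * norm x"
  using norm_blinfun[of f x] by simp

lemma q_nonneg: "0 \<le> (norm u)\<^sup>2 / 2 + (norm (v::'a::real_normed_vector \<Rightarrow>\<^sub>L real))\<^sup>2 / 2 + blinfun_apply v u"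
proof -
  have "- (norm v * norm u) \<le> blinfun_apply v u" using abs_blinfun_le[of v u] by linarith
  moreover have "0 \<le> (norm u - norm v)\<^sup>2 / 2" by simp
  moreover have "(norm u - norm v)\<^sup>2 / 2 = (norm u)\<^sup>2 / 2 + (norm v)\<^sup>2 / 2 - norm v * norm u"
    by (simp add: power2_eq_square field_simps)
  ultimately show ?thesis by linarith
qed

lemma qd_exists:
  assumes "quasidense G" "G \<noteq> {}" "\<epsilon> > 0"
  shows "\<exists>p\<in>G. (norm (fst p - x))\<^sup>2 / 2 + (norm (snd p - x'))\<^sup>2 / 2 + blinfun_apply (snd p - x') (fst p - x) < \<epsilon>"
proof -
  have "(INF p\<in>G. (norm (fst p - x))\<^sup>2 / 2 + (norm (snd p - x'))\<^sup>2 / 2 + blinfun_apply (snd p - x') (fst p - x)) < \<epsilon>"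
    using assms(1,3) unfolding quasidense_def by (meson le_less_trans)
  then show ?thesis using cInf_lessD[of "(\<lambda>p. (norm (fst p - x))\<^sup>2 / 2 + (norm (snd p - x'))\<^sup>2 / 2 + blinfun_apply (snd p - x') (fst p - x)) ` G" \<epsilon>] assms(2)
    by blast
qed

lemma infdist_ge_lemma:
  assumes "W \<noteq> {}" "\<And>a. a \<in> W \<Longrightarrow> e \<le> dist x a"
  shows "e \<le> infdist x W"
  unfolding infdist_notempty[OF assms(1)] by (rule cINF_greatest[OF assms(1)]) (rule assms(2))

lemma infdist_lt:
  assumes "W \<noteq> {}" "infdist x W < e"
  shows "\<exists>a\<in>W. dist x a < e"
proof -
  have "Inf ((\<lambda>a. dist x a) ` W) < e" using assms(2) unfolding infdist_notempty[OF assms(1)] .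
  then show ?thesis using cInf_lessD[of "(\<lambda>a. dist x a) ` W" e] assms(1) by blast
qed

lemma infdist_convex:
  fixes W :: "'b::real_normed_vector set"
  assumes cvx: "convex W" and ne: "W \<noteq> {}"
  shows "convex_on UNIV (\<lambda>x. infdist x W)"
proof (rule convex_onI)
  show "convex (UNIV :: 'b set)" by simp
  fix t :: real and x y :: 'b assume t: "0 < t" "t < 1"
  show "infdist ((1 - t) *\<^sub>R x + t *\<^sub>R y) W \<le> (1 - t) * infdist x W + t * infdist y W"
  proof (rule field_le_epsilon)
    fix e :: real assume e: "0 < e"
    obtain a where a: "a \<in> W" "dist x a < infdist x W + e" using infdist_lt[OF ne, of x "infdist x W + e"] e by auto
    obtain b where b: "b \<in> W" "dist y b < infdist y W + e" using infdist_lt[OF ne, of y "infdist y W + e"] e by auto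
    have p: "(1 - t) *\<^sub>R a + t *\<^sub>R b \<in> W" using convexD[OF cvx a(1) b(1), of "1 - t" t] t by simp
    have "infdist ((1 - t) *\<^sub>R x + t *\<^sub>R y) W \<le> dist ((1 - t) *\<^sub>R x + t *\<^sub>R y) ((1 - t) *\<^sub>R a + t *\<^sub>R b)"
      by (rule infdist_le[OF p])
    also have "\<dots> = norm ((1 - t) *\<^sub>R (x - a) + t *\<^sub>R (y - b))"
      unfolding dist_norm by (simp add: algebra_simps)
    also have "\<dots> \<le> norm ((1 - t) *\<^sub>R (x - a)) + norm (t *\<^sub>R (y - b))" by (rule norm_triangle_ineq)
    also have "\<dots> = (1 - t) * dist x a + t * dist y b" using t by (simp add: dist_norm)
    also have "\<dots> \<le> (1 - t) * (infdist x W + e) + t * (infdist y W + e)"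
      using a(2) b(2) t by (intro add_mono mult_left_mono) auto
    also have "\<dots> = (1 - t) * infdist x W + t * infdist y W + e" by (simp add: algebra_simps)
    finally show "infdist ((1 - t) *\<^sub>R x + t *\<^sub>R y) W \<le> (1 - t) * infdist x W + t * infdist y W + e" .
  qed
qed

lemma convex_on_sq:
  fixes g :: "'b::real_vector \<Rightarrow> real"
  assumes cg: "convex_on UNIV g" and nn: "\<And>x. 0 \<le> g x"
  shows "convex_on UNIV (\<lambda>x. (g x)\<^sup>2)"
proof (rule convex_onI)
  show "convex (UNIV :: 'b set)" by simp
  fix t :: real and x y :: 'b assume t: "0 < t" "t < 1"
  have "g ((1 - t) *\<^sub>R x + t *\<^sub>R y) \<le> (1 - t) * g x + t * g y"
    using convex_onD[OF cg, of t x y] t by simp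
  then have "(g ((1 - t) *\<^sub>R x + t *\<^sub>R y))\<^sup>2 \<le> ((1 - t) * g x + t * g y)\<^sup>2"
    using nn by (intro power_mono) auto
  also have "\<dots> = (1 - t) * (g x)\<^sup>2 + t * (g y)\<^sup>2 - t * (1 - t) * (g x - g y)\<^sup>2"
    by (simp add: power2_eq_square algebra_simps)
  also have "\<dots> \<le> (1 - t) * (g x)\<^sup>2 + t * (g y)\<^sup>2"
    using t by simp
  finally show "(g ((1 - t) *\<^sub>R x + t *\<^sub>R y))\<^sup>2 \<le> (1 - t) * (g x)\<^sup>2 + t * (g y)\<^sup>2" .
qed

lemma convex_on_norm_sq: "convex_on UNIV (\<lambda>x::'b::real_normed_vector. (norm (x - w))\<^sup>2)"
proof -
  have "convex_on UNIV (\<lambda>x::'b. dist w x)" by (rule convex_on_dist) simp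
  then have "convex_on UNIV (\<lambda>x::'b. norm (x - w))" by (simp add: dist_norm norm_minus_commute)
  then show ?thesis by (rule convex_on_sq) simp
qed

lemma quad_bound:
  fixes X Y P Q :: real
  assumes "0 \<le> X" "0 \<le> Y" "0 \<le> P" "0 \<le> Q" "X\<^sup>2 / 2 + Y\<^sup>2 / 2 < 1 + Q * X + P * Y + Q * P"
  shows "X \<le> 2 * (Q + P + 1) \<and> Y \<le> 2 * (Q + P + 1)"
proof -
  have h: "X\<^sup>2 + Y\<^sup>2 < 2 + 2 * Q * X + 2 * P * Y + 2 * Q * P" using assms(5) by simp
  have "(X - Q)\<^sup>2 + (Y - P)\<^sup>2 < (Q + P + 2)\<^sup>2"
  proof -
    have "(X - Q)\<^sup>2 + (Y - P)\<^sup>2 = X\<^sup>2 + Y\<^sup>2 - 2 * Q * X - 2 * P * Y + Q\<^sup>2 + P\<^sup>2"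
      by (simp add: power2_eq_square algebra_simps)
    also have "\<dots> < 2 + 2 * Q * P + Q\<^sup>2 + P\<^sup>2" using h by linarith
    also have "\<dots> \<le> (Q + P + 2)\<^sup>2"
    proof -
      have "(Q + P + 2)\<^sup>2 = Q\<^sup>2 + P\<^sup>2 + 4 + 2 * Q * P + 4 * Q + 4 * P" by (simp add: power2_eq_square algebra_simps)
      then show ?thesis using assms(3,4) by linarith
    qed
    finally show ?thesis .
  qed
  then have "(X - Q)\<^sup>2 < (Q + P + 2)\<^sup>2" "(Y - P)\<^sup>2 < (Q + P + 2)\<^sup>2"
    by (smt (verit) zero_le_power2)+
  then have s1: "\<bar>X - Q\<bar>\<^sup>2 < (Q + P + 2)\<^sup>2" and s2: "\<bar>Y - P\<bar>\<^sup>2 < (Q + P + 2)\<^sup>2" by simp_all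
  have "\<bar>X - Q\<bar> < Q + P + 2" by (rule power2_less_imp_less[OF s1]) (use assms(3,4) in linarith)
  moreover have "\<bar>Y - P\<bar> < Q + P + 2" by (rule power2_less_imp_less[OF s2]) (use assms(3,4) in linarith)
  ultimately have "X - Q < Q + P + 2" "Y - P < Q + P + 2" by (simp_all add: abs_less_iff)
  moreover have "2 * (Q + P + 1) = 2 * Q + 2 * P + 2" by simp
  ultimately show ?thesis using assms(3,4) by (intro conjI) linarith+
qed

lemma dir_b_a:
  fixes G :: "('a::banach \<times> ('a \<Rightarrow>\<^sub>L real)) set"
  assumes Hb: "\<forall>w::'a. \<forall>W :: ('a \<Rightarrow>\<^sub>L real) set. \<forall>\<eta>::real.
       W \<noteq> {} \<and> compactin weak_star_topology W \<and> convex W \<and> \<eta> > 0 \<longrightarrow>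
       (\<exists>(s, s') \<in> G.
          (norm (s - w))\<^sup>2 / 2 + (infdist s' W)\<^sup>2 / 2
          + (SUP x' \<in> W. blinfun_apply (s' - x') (s - w)) < \<eta>)"
  shows "quasidense G"
  unfolding quasidense_def
proof (intro allI)
  fix x :: 'a and x' :: "'a \<Rightarrow>\<^sub>L real"
  define f where "f p = (norm (fst p - x))\<^sup>2 / 2 + (norm (snd p - x'))\<^sup>2 / 2 + blinfun_apply (snd p - x') (fst p - x)"
    for p :: "'a \<times> ('a \<Rightarrow>\<^sub>L real)"
  have bdd: "bdd_below (f ` G)" unfolding f_def by (rule bdd_belowI[of _ 0]) (auto intro: q_nonneg)
  have "(INF p\<in>G. f p) \<le> 0"
  proof (rule field_le_epsilon)
    fix e :: real assume e: "0 < e"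
    have c1: "compactin weak_star_topology {x'}" by simp
    have "{x'} \<noteq> {} \<and> compactin weak_star_topology {x'} \<and> convex {x'} \<and> e > 0" using c1 e by simp
    then obtain s s' where ss: "(s, s') \<in> G"
      "(norm (s - x))\<^sup>2 / 2 + (infdist s' {x'})\<^sup>2 / 2 + (SUP y \<in> {x'}. blinfun_apply (s' - y) (s - x)) < e"
      using Hb by blast
    then have "f (s, s') < e" unfolding f_def by (simp add: dist_norm)
    then have "(INF p\<in>G. f p) < e" using cINF_lower[OF bdd ss(1)] by linarith
    then show "(INF p\<in>G. f p) \<le> 0 + e" by simp
  qed
  then show "(INF p\<in>G. (norm (fst p - x))\<^sup>2 / 2 + (norm (snd p - x'))\<^sup>2 / 2 + blinfun_apply (snd p - x') (fst p - x)) \<le> 0"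
    unfolding f_def .
qed

lemma monoD:
  assumes "monotone_graph G" "a \<in> G" "b \<in> G"
  shows "0 \<le> blinfun_apply (snd a - snd b) (fst a - fst b)"
proof -
  obtain s s' where a: "a = (s, s')" by (cases a)
  obtain t t' where b: "b = (t, t')" by (cases b)
  have "\<forall>(s, s') \<in> G. \<forall>(t, t') \<in> G. blinfun_apply (s' - t') (s - t) \<ge> 0"
    using assms(1) unfolding monotone_graph_def .
  then have "blinfun_apply (s' - t') (s - t) \<ge> 0" using assms(2,3) unfolding a b by blast
  then show ?thesis unfolding a b by simp
qed

lemma bil_expand:
  "blinfun_apply (X + Y) (U + V) = blinfun_apply X U + blinfun_apply X V + blinfun_apply Y U + blinfun_apply Y V"
  by (simp add: blinfun.add_left blinfun.add_right)

lemma bil_expand4: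
  "blinfun_apply (X - Y) (U - V) = blinfun_apply X U - blinfun_apply X V - blinfun_apply Y U + blinfun_apply Y V"
  by (simp add: blinfun.diff_left blinfun.diff_right)

lemma dir_a_b:
  fixes G :: "('a::banach \<times> ('a \<Rightarrow>\<^sub>L real)) set" and W :: "('a \<Rightarrow>\<^sub>L real) set" and w :: 'a
  assumes qd: "quasidense G" and Gne: "G \<noteq> {}" and mono: "monotone_graph G"
    and Wne: "W \<noteq> {}" and cpt: "compactin weak_star_topology W" and cvx: "convex W" and eta: "\<eta> > 0"
  shows "\<exists>(s, s')\<in>G. (norm (s - w))\<^sup>2 / 2 + (infdist s' W)\<^sup>2 / 2 + (SUP x'\<in>W. blinfun_apply (s' - x') (s - w)) < \<eta>"
proof -
  obtain R where R: "\<forall>z\<in>W. norm z \<le> R" using ws_norm_bounded[OF cpt] by blast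
  obtain z1 where z1: "z1 \<in> W" using Wne by blast
  have R0: "0 \<le> R"
  proof -
    have "norm z1 \<le> R" using R z1 by blast
    moreover have "0 \<le> norm z1" by simp
    ultimately show ?thesis by linarith
  qed
  obtain a0 where a0: "a0 \<in> G" using Gne by blast
  define P where "P = norm (w - fst a0)"
  define Q where "Q = R + norm (snd a0)"
  define M where "M = 2 * (Q + P + 1)"
  define K0 where "K0 = 4 * M + 4 * R + 1"
  define \<rho> where "\<rho> = min 1 (\<eta> / (4 * K0))"
  define \<epsilon> where "\<epsilon> = \<rho>\<^sup>2 / 6"
  have P0: "0 \<le> P" unfolding P_def by simp
  have Q0: "0 \<le> Q" unfolding Q_def using R0 by simp
  have M0: "0 \<le> M" unfolding M_def using P0 Q0 by simp
  have K1: "1 \<le> K0" unfolding K0_def using M0 R0 by simp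
  have \<rho>0: "0 < \<rho>" unfolding \<rho>_def using eta K1 by simp
  have \<rho>1: "\<rho> \<le> 1" unfolding \<rho>_def by simp
  have \<rho>e: "\<rho> \<le> \<eta> / (4 * K0)" unfolding \<rho>_def by simp
  have \<rho>K: "\<rho> * K0 \<le> \<eta> / 4"
  proof -
    have "\<rho> * K0 \<le> \<eta> / (4 * K0) * K0" using \<rho>e K1 by (intro mult_right_mono) auto
    also have "\<dots> = \<eta> / 4" using K1 by simp
    finally show ?thesis .
  qed
  have \<epsilon>0: "0 < \<epsilon>" unfolding \<epsilon>_def using \<rho>0 by simp
  have \<rho>sq: "\<rho>\<^sup>2 = 6 * \<epsilon>" unfolding \<epsilon>_def by simp
  have \<rho>sq1: "\<rho>\<^sup>2 \<le> \<rho>" using \<rho>0 \<rho>1 by (simp add: power2_eq_square mult_left_le)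
  have \<epsilon>1: "\<epsilon> \<le> 1" using \<rho>sq \<rho>sq1 \<rho>1 by linarith
  have fin: "8 * \<epsilon> + \<rho> * K0 < \<eta>"
  proof -
    have "\<rho> \<le> \<rho> * K0" using \<rho>0 K1 by simp
    then show ?thesis using \<rho>sq \<rho>sq1 \<rho>K eta by linarith
  qed
  define f where "f a z = (norm (fst a - w))\<^sup>2 / 2 + (infdist (snd a) W)\<^sup>2 / 2 + blinfun_apply (snd a - z) (fst a - w)"
    for a :: "'a \<times> ('a \<Rightarrow>\<^sub>L real)" and z
  define Cf where "Cf a = (norm (fst a - w))\<^sup>2 / 2 + (infdist (snd a) W)\<^sup>2 / 2 + blinfun_apply (snd a) (fst a - w)"
    for a :: "'a \<times> ('a \<Rightarrow>\<^sub>L real)"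
  have fC: "f a z = Cf a - blinfun_apply z (fst a - w)" for a z
    by (simp add: f_def Cf_def blinfun.diff_left)
  define GM where "GM = {a\<in>G. norm (fst a - w) \<le> M \<and> norm (snd a) \<le> M + R}"
  have A: "\<exists>a\<in>GM. f a z < \<epsilon>" if z: "z \<in> W" for z
  proof -
    obtain a where a: "a \<in> G" and q: "(norm (fst a - w))\<^sup>2 / 2 + (norm (snd a - z))\<^sup>2 / 2 + blinfun_apply (snd a - z) (fst a - w) < \<epsilon>"
      using qd_exists[OF qd Gne \<epsilon>0, of w z] by blast
    define u where "u = fst a - w"
    define v where "v = snd a - z"
    have q': "(norm u)\<^sup>2 / 2 + (norm v)\<^sup>2 / 2 + blinfun_apply v u < \<epsilon>" using q unfolding u_def v_def .
    have mo: "0 \<le> blinfun_apply (snd a - snd a0) (fst a - fst a0)" using monoD[OF mono a a0] .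
    have e1: "snd a - snd a0 = v + (z - snd a0)" unfolding v_def by simp
    have e2: "fst a - fst a0 = u + (w - fst a0)" unfolding u_def by simp
    have split: "blinfun_apply (snd a - snd a0) (fst a - fst a0) = blinfun_apply v u + blinfun_apply v (w - fst a0) + blinfun_apply (z - snd a0) u + blinfun_apply (z - snd a0) (w - fst a0)"
      unfolding e1 e2 by (rule bil_expand)
    have nz: "norm (z - snd a0) \<le> Q"
    proof -
      have "norm (z - snd a0) \<le> norm z + norm (snd a0)" by (rule norm_triangle_ineq4)
      then show ?thesis unfolding Q_def using R z by fastforce
    qed
    have b1: "\<bar>blinfun_apply v (w - fst a0)\<bar> \<le> norm v * P" unfolding P_def by (rule abs_blinfun_le)
    have b2: "\<bar>blinfun_apply (z - snd a0) u\<bar> \<le> Q * norm u"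
    proof -
      have "\<bar>blinfun_apply (z - snd a0) u\<bar> \<le> norm (z - snd a0) * norm u" by (rule abs_blinfun_le)
      also have "\<dots> \<le> Q * norm u" using nz by (intro mult_right_mono) auto
      finally show ?thesis .
    qed
    have b3: "\<bar>blinfun_apply (z - snd a0) (w - fst a0)\<bar> \<le> Q * P"
    proof -
      have "\<bar>blinfun_apply (z - snd a0) (w - fst a0)\<bar> \<le> norm (z - snd a0) * P" unfolding P_def by (rule abs_blinfun_le)
      also have "\<dots> \<le> Q * P" using nz P0 by (intro mult_right_mono) auto
      finally show ?thesis .
    qed
    have "(norm u)\<^sup>2 / 2 + (norm v)\<^sup>2 / 2 < 1 + Q * norm u + P * norm v + Q * P"
      using q' mo split b1 b2 b3 \<epsilon>1 by (simp add: abs_le_iff mult.commute)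
    then have bd: "norm u \<le> M \<and> norm v \<le> M"
      using quad_bound[of "norm u" "norm v" P Q] P0 Q0 unfolding M_def by simp
    have "norm (snd a) \<le> M + R"
    proof -
      have "snd a = v + z" unfolding v_def by simp
      then have "norm (snd a) \<le> norm v + norm z" using norm_triangle_ineq by metis
      then show ?thesis using bd R z by fastforce
    qed
    then have aGM: "a \<in> GM" unfolding GM_def using a bd u_def by blast
    have "infdist (snd a) W \<le> norm v" unfolding v_def using infdist_le[OF z, of "snd a"] by (simp add: dist_norm)
    then have "(infdist (snd a) W)\<^sup>2 \<le> (norm v)\<^sup>2" using infdist_nonneg by (intro power_mono) auto
    then have "f a z < \<epsilon>" using q' unfolding f_def u_def[symmetric] v_def[symmetric] by linarith
    then show ?thesis using aGM by blast
  qed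
  define Op where "Op a = {z. blinfun_apply z (fst a - w) \<in> {Cf a - \<epsilon><..}}" for a :: "'a \<times> ('a \<Rightarrow>\<^sub>L real)"
  have Oeq: "z \<in> Op a \<longleftrightarrow> f a z < \<epsilon>" for a z unfolding Op_def fC by auto
  have openO: "openin weak_star_topology (Op a)" for a unfolding Op_def by (rule ws_open_eval) simp
  have Wsub: "W \<subseteq> \<Union>(Op ` GM)" using A Oeq by blast
  have "\<forall>U. (\<forall>u\<in>U. openin weak_star_topology u) \<and> W \<subseteq> \<Union>U \<longrightarrow> (\<exists>F. finite F \<and> F \<subseteq> U \<and> W \<subseteq> \<Union>F)"
    using cpt unfolding compactin_def by (rule conjunct2)
  then obtain F' where F': "finite F'" "F' \<subseteq> Op ` GM" "W \<subseteq> \<Union>F'"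
  proof -
    have "\<exists>F. finite F \<and> F \<subseteq> Op ` GM \<and> W \<subseteq> \<Union>F"
      using \<open>\<forall>U. _\<close>[rule_format, of "Op ` GM"] openO Wsub by blast
    then show ?thesis using that by blast
  qed
  obtain F where F: "F \<subseteq> GM" "finite F" "F' = Op ` F" using finite_subset_image[OF F'(1,2)] by blast
  have cov: "\<forall>z\<in>W. \<exists>a\<in>F. Cf a - blinfun_apply z (fst a - w) < \<epsilon>"
  proof
    fix z assume "z \<in> W"
    then obtain a where "a \<in> F" "z \<in> Op a" using F'(3) F(3) by blast
    then show "\<exists>a\<in>F. Cf a - blinfun_apply z (fst a - w) < \<epsilon>" using Oeq fC by metis
  qed
  have Fne: "F \<noteq> {}" using cov Wne by blast
  obtain l where l: "\<forall>a\<in>F. 0 \<le> l a" "sum l F = 1"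
    "\<forall>z\<in>W. (\<Sum>a\<in>F. l a * (Cf a - blinfun_apply z (fst a - w))) < \<epsilon>"
    using fin_minimax[OF F(2) Fne cpt cvx cov] by blast
  have lf: "(\<Sum>a\<in>F. l a * f a z) < \<epsilon>" if "z \<in> W" for z using l(3) that fC by simp
  have FG: "F \<subseteq> G" using F(1) unfolding GM_def by blast
  define sb where "sb = (\<Sum>a\<in>F. l a *\<^sub>R fst a)"
  define sb' where "sb' = (\<Sum>a\<in>F. l a *\<^sub>R snd a)"
  define \<Delta> where "\<Delta> = (\<Sum>a\<in>F. l a * blinfun_apply (snd a) (fst a)) - blinfun_apply sb' sb"
  have e1: "blinfun_apply sb' x = (\<Sum>a\<in>F. l a * blinfun_apply (snd a) x)" for x
    unfolding sb'_def by (simp add: blinfun.sum_left blinfun.scaleR_left)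
  have e2: "blinfun_apply y sb = (\<Sum>a\<in>F. l a * blinfun_apply y (fst a))" for y
    unfolding sb_def by (simp add: blinfun.sum_right blinfun.scaleR_right)
  have lsum: "(\<Sum>a\<in>F. l a * c) = c" for c
  proof -
    have "(\<Sum>a\<in>F. l a * c) = (\<Sum>a\<in>F. l a) * c" by (rule sum_distrib_right[symmetric])
    then show ?thesis using l(2) by simp
  qed
  have D1: "blinfun_apply (s' - sb') (s - sb) = (\<Sum>a\<in>F. l a * blinfun_apply (s' - snd a) (s - fst a)) - \<Delta>" for s s'
  proof -
    have "(\<Sum>a\<in>F. l a * blinfun_apply (s' - snd a) (s - fst a)) = (\<Sum>a\<in>F. l a * blinfun_apply s' s) - (\<Sum>a\<in>F. l a * blinfun_apply s' (fst a)) - (\<Sum>a\<in>F. l a * blinfun_apply (snd a) s) + (\<Sum>a\<in>F. l a * blinfun_apply (snd a) (fst a))"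
    proof -
      have pw: "l a * blinfun_apply (s' - snd a) (s - fst a) = l a * blinfun_apply s' s - l a * blinfun_apply s' (fst a) - l a * blinfun_apply (snd a) s + l a * blinfun_apply (snd a) (fst a)" for a
        by (simp add: bil_expand4 algebra_simps)
      show ?thesis by (simp only: pw sum.distrib sum_subtractf)
    qed
    then show ?thesis unfolding \<Delta>_def bil_expand4 e1 e2 lsum by simp
  qed
  have Dsym: "blinfun_apply (sb' - snd a) (sb - fst a) = blinfun_apply (snd a - sb') (fst a - sb)" for a
    by (simp add: bil_expand4)
  have \<Delta>0: "0 \<le> \<Delta>"
  proof -
    have ge: "- \<Delta> \<le> blinfun_apply (snd j - sb') (fst j - sb)" if j: "j \<in> F" for j
    proof -
      have "0 \<le> (\<Sum>a\<in>F. l a * blinfun_apply (snd j - snd a) (fst j - fst a))"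
      proof (rule sum_nonneg)
        fix b assume b: "b \<in> F"
        then have "b \<in> G" "j \<in> G" using FG j by auto
        then show "0 \<le> l b * blinfun_apply (snd j - snd b) (fst j - fst b)"
          using l(1) b monoD[OF mono \<open>j \<in> G\<close> \<open>b \<in> G\<close>] by simp
      qed
      then show ?thesis using D1[of "snd j" "fst j"] by linarith
    qed
    have "(\<Sum>j\<in>F. l j * (- \<Delta>)) \<le> (\<Sum>j\<in>F. l j * blinfun_apply (snd j - sb') (fst j - sb))"
      using ge l(1) by (intro sum_mono mult_left_mono) auto
    moreover have "(\<Sum>j\<in>F. l j * blinfun_apply (snd j - sb') (fst j - sb)) = \<Delta>"
      using D1[of sb' sb] unfolding Dsym by simp
    ultimately show ?thesis unfolding lsum by linarith
  qed
  define A where "A = norm (sb - w)"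
  define d where "d = infdist sb' W"
  define ft where "ft z = A\<^sup>2 / 2 + d\<^sup>2 / 2 + blinfun_apply (sb' - z) (sb - w)" for z
  have n1: "(norm (sb - w))\<^sup>2 \<le> (\<Sum>a\<in>F. l a * (norm (fst a - w))\<^sup>2)"
    unfolding sb_def using convex_on_sum[OF F(2) Fne convex_on_norm_sq[of w] l(2), of fst] l(1) by simp
  have n2: "(infdist sb' W)\<^sup>2 \<le> (\<Sum>a\<in>F. l a * (infdist (snd a) W)\<^sup>2)"
    unfolding sb'_def
    using convex_on_sum[OF F(2) Fne convex_on_sq[OF infdist_convex[OF cvx Wne] infdist_nonneg] l(2), of snd] l(1)
    by simp
  have n3: "(\<Sum>a\<in>F. l a * blinfun_apply (snd a - z) (fst a - w)) = \<Delta> + blinfun_apply (sb' - z) (sb - w)" for z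
  proof -
    have "(\<Sum>a\<in>F. l a * blinfun_apply (snd a - z) (fst a - w)) = (\<Sum>a\<in>F. l a * blinfun_apply (snd a) (fst a)) - (\<Sum>a\<in>F. l a * blinfun_apply (snd a) w) - (\<Sum>a\<in>F. l a * blinfun_apply z (fst a)) + (\<Sum>a\<in>F. l a * blinfun_apply z w)"
    proof -
      have pw: "l a * blinfun_apply (snd a - z) (fst a - w) = l a * blinfun_apply (snd a) (fst a) - l a * blinfun_apply (snd a) w - l a * blinfun_apply z (fst a) + l a * blinfun_apply z w" for a
        by (simp add: bil_expand4 algebra_simps)
      show ?thesis by (simp only: pw sum.distrib sum_subtractf)
    qed
    then show ?thesis unfolding \<Delta>_def bil_expand4 e1 e2 lsum by simp
  qed
  have fsum: "(\<Sum>a\<in>F. l a * f a z) = (\<Sum>a\<in>F. l a * (norm (fst a - w))\<^sup>2) / 2 + (\<Sum>a\<in>F. l a * (infdist (snd a) W)\<^sup>2) / 2 + (\<Sum>a\<in>F. l a * blinfun_apply (snd a - z) (fst a - w))" for z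
    unfolding f_def by (simp add: sum.distrib sum_divide_distrib algebra_simps)
  have ftlt: "ft z + \<Delta> < \<epsilon>" if z: "z \<in> W" for z
  proof -
    have "ft z + \<Delta> \<le> (\<Sum>a\<in>F. l a * f a z)"
      unfolding fsum n3 ft_def A_def d_def using n1 n2 by linarith
    then show ?thesis using lf[OF z] by linarith
  qed
  have lsumv: "(\<Sum>a\<in>F. l a *\<^sub>R x) = x" for x :: "'b::real_vector"
    using l(2) by (simp add: scaleR_sum_left[symmetric])
  have A_le: "A \<le> M"
  proof -
    have sbw: "sb - w = (\<Sum>a\<in>F. l a *\<^sub>R (fst a - w))"
      unfolding sb_def using lsumv[of w] by (simp add: scaleR_diff_right sum_subtractf)
    have "A \<le> (\<Sum>a\<in>F. norm (l a *\<^sub>R (fst a - w)))" unfolding A_def sbw by (rule norm_sum)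
    also have "\<dots> \<le> (\<Sum>a\<in>F. l a * M)"
    proof (rule sum_mono)
      fix a assume a: "a \<in> F"
      then have "norm (fst a - w) \<le> M" using F(1) unfolding GM_def by blast
      then show "norm (l a *\<^sub>R (fst a - w)) \<le> l a * M" using l(1) a by (simp add: mult_left_mono)
    qed
    finally show ?thesis unfolding lsum .
  qed
  have sb'_le: "norm sb' \<le> M + R"
  proof -
    have "norm sb' \<le> (\<Sum>a\<in>F. norm (l a *\<^sub>R snd a))" unfolding sb'_def by (rule norm_sum)
    also have "\<dots> \<le> (\<Sum>a\<in>F. l a * (M + R))"
    proof (rule sum_mono)
      fix a assume a: "a \<in> F"
      then have "norm (snd a) \<le> M + R" using F(1) unfolding GM_def by blast
      then show "norm (l a *\<^sub>R snd a) \<le> l a * (M + R)" using l(1) a by (simp add: mult_left_mono)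
    qed
    finally show ?thesis unfolding lsum .
  qed
  have A0: "0 \<le> A" unfolding A_def by simp
  have d0: "0 \<le> d" unfolding d_def by (rule infdist_nonneg)
  have nzb: "norm (sb' - z) \<le> M + 2 * R" if "z \<in> W" for z
  proof -
    have "norm (sb' - z) \<le> norm sb' + norm z" by (rule norm_triangle_ineq4)
    then show ?thesis using sb'_le R that by fastforce
  qed
  have d_le: "d \<le> M + 2 * R"
  proof -
    have "d \<le> dist sb' z1" unfolding d_def by (rule infdist_le[OF z1])
    then show ?thesis using nzb[OF z1] by (simp add: dist_norm)
  qed
  have \<Delta>2: "\<Delta> < 2 * \<epsilon>"
  proof -
    define \<theta> where "\<theta> = \<epsilon> / (M + 1)"
    have \<theta>0: "0 < \<theta>" unfolding \<theta>_def using \<epsilon>0 M0 by simp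
    obtain z0 where z0: "z0 \<in> W" "dist sb' z0 < d + \<theta>"
      using infdist_lt[OF Wne, of sb' "d + \<theta>"] \<theta>0 unfolding d_def by auto
    have "- (norm (sb' - z0) * A) \<le> blinfun_apply (sb' - z0) (sb - w)"
      using abs_blinfun_le[of "sb' - z0" "sb - w"] unfolding A_def by linarith
    moreover have "norm (sb' - z0) * A \<le> (d + \<theta>) * A"
      using z0(2) A0 by (intro mult_right_mono) (auto simp: dist_norm)
    moreover have "0 \<le> (A - d)\<^sup>2 / 2" by simp
    moreover have "(A - d)\<^sup>2 / 2 = A\<^sup>2 / 2 + d\<^sup>2 / 2 - d * A" by (simp add: power2_eq_square field_simps)
    moreover have "\<theta> * A \<le> \<theta> * M" using A_le \<theta>0 by (intro mult_left_mono) auto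
    moreover have "\<theta> * M < \<epsilon>"
    proof -
      have "\<theta> * M = \<epsilon> * M / (M + 1)" unfolding \<theta>_def by simp
      also have "\<dots> < \<epsilon>" using \<epsilon>0 M0 by (simp add: field_simps)
      finally show ?thesis .
    qed
    ultimately have "ft z0 > - \<epsilon>" unfolding ft_def by (simp add: algebra_simps)
    then show ?thesis using ftlt[OF z0(1)] by linarith
  qed
  obtain a where aG: "a \<in> G" and qa: "(norm (fst a - sb))\<^sup>2 / 2 + (norm (snd a - sb'))\<^sup>2 / 2 + blinfun_apply (snd a - sb') (fst a - sb) < \<epsilon>"
    using qd_exists[OF qd Gne \<epsilon>0, of sb sb'] by blast
  define s where "s = fst a"
  define s' where "s' = snd a"
  define p where "p = s - sb"
  define p' where "p' = s' - sb'"
  have qa': "(norm p)\<^sup>2 / 2 + (norm p')\<^sup>2 / 2 + blinfun_apply p' p < \<epsilon>" using qa unfolding p_def p'_def s_def s'_def .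
  have pp_ge: "- \<Delta> \<le> blinfun_apply p' p"
  proof -
    have "0 \<le> (\<Sum>b\<in>F. l b * blinfun_apply (s' - snd b) (s - fst b))"
    proof (rule sum_nonneg)
      fix b assume b: "b \<in> F"
      then have "b \<in> G" using FG by auto
      then show "0 \<le> l b * blinfun_apply (s' - snd b) (s - fst b)"
        using l(1) b monoD[OF mono aG \<open>b \<in> G\<close>] unfolding s_def s'_def by simp
    qed
    then show ?thesis using D1[of s' s] unfolding p_def p'_def by linarith
  qed
  have pp_lt: "blinfun_apply p' p < \<epsilon>" using qa' zero_le_power2[of "norm p"] zero_le_power2[of "norm p'"] by linarith
  have np: "norm p < \<rho>" and np': "norm p' < \<rho>"
  proof -
    have "(norm p)\<^sup>2 / 2 + (norm p')\<^sup>2 / 2 < 3 * \<epsilon>" using qa' pp_ge \<Delta>2 by linarith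
    then have h1: "(norm p)\<^sup>2 < \<rho>\<^sup>2" using \<rho>sq zero_le_power2[of "norm p'"] by linarith
    have h2: "(norm p')\<^sup>2 < \<rho>\<^sup>2" using \<open>(norm p)\<^sup>2 / 2 + (norm p')\<^sup>2 / 2 < 3 * \<epsilon>\<close> \<rho>sq zero_le_power2[of "norm p"] by linarith
    show "norm p < \<rho>" by (rule power2_less_imp_less[OF h1]) (use \<rho>0 in linarith)
    show "norm p' < \<rho>" by (rule power2_less_imp_less[OF h2]) (use \<rho>0 in linarith)
  qed
  have main: "(norm (s - w))\<^sup>2 / 2 + (infdist s' W)\<^sup>2 / 2 + blinfun_apply (s' - z) (s - w) < 8 * \<epsilon> + \<rho> * K0"
    if z: "z \<in> W" for z
  proof -
    have sw: "s - w = (sb - w) + p" unfolding p_def by simp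
    have sz: "s' - z = (sb' - z) + p'" unfolding p'_def by simp
    have nsw: "norm (s - w) \<le> A + \<rho>"
    proof -
      have "norm (s - w) \<le> norm (sb - w) + norm p" unfolding sw by (rule norm_triangle_ineq)
      then show ?thesis using np unfolding A_def by linarith
    qed
    have nsw2: "(norm (s - w))\<^sup>2 \<le> (A + \<rho>)\<^sup>2" using nsw by (intro power_mono) auto
    have ds: "infdist s' W \<le> d + \<rho>"
    proof -
      have "infdist s' W \<le> infdist sb' W + dist s' sb'" by (rule infdist_triangle)
      then show ?thesis using np' unfolding d_def p'_def by (simp add: dist_norm)
    qed
    have ds2: "(infdist s' W)\<^sup>2 \<le> (d + \<rho>)\<^sup>2" using ds infdist_nonneg by (intro power_mono) auto
    have bil: "blinfun_apply (s' - z) (s - w) = blinfun_apply (sb' - z) (sb - w) + blinfun_apply (sb' - z) p + blinfun_apply p' (sb - w) + blinfun_apply p' p"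
      unfolding sw sz by (rule bil_expand)
    have t1: "blinfun_apply (sb' - z) p \<le> (M + 2 * R) * \<rho>"
    proof -
      have "blinfun_apply (sb' - z) p \<le> norm (sb' - z) * norm p" using abs_blinfun_le[of "sb' - z" p] by linarith
      also have "\<dots> \<le> (M + 2 * R) * \<rho>" using nzb[OF z] np M0 R0 by (intro mult_mono) auto
      finally show ?thesis .
    qed
    have t2: "blinfun_apply p' (sb - w) \<le> \<rho> * A"
    proof -
      have "blinfun_apply p' (sb - w) \<le> norm p' * A" using abs_blinfun_le[of p' "sb - w"] unfolding A_def by linarith
      also have "\<dots> \<le> \<rho> * A" using np' A0 by (intro mult_right_mono) auto
      finally show ?thesis .
    qed
    have sq1: "(A + \<rho>)\<^sup>2 = A\<^sup>2 + 2 * (\<rho> * A) + \<rho>\<^sup>2" by (simp add: power2_eq_square algebra_simps)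
    have sq2: "(d + \<rho>)\<^sup>2 = d\<^sup>2 + 2 * (\<rho> * d) + \<rho>\<^sup>2" by (simp add: power2_eq_square algebra_simps)
    have m1: "\<rho> * A \<le> \<rho> * M" using A_le \<rho>0 by (intro mult_left_mono) auto
    have m2: "\<rho> * d \<le> \<rho> * (M + 2 * R)" using d_le \<rho>0 by (intro mult_left_mono) auto
    have K0e: "\<rho> * K0 = \<rho> * (4 * M + 4 * R) + \<rho>" unfolding K0_def by (simp add: algebra_simps)
    have ftz: "ft z < \<epsilon>" using ftlt[OF z] \<Delta>0 by linarith
    have "(norm (s - w))\<^sup>2 / 2 + (infdist s' W)\<^sup>2 / 2 + blinfun_apply (s' - z) (s - w)
        \<le> ft z + \<rho> * A + \<rho> * d + \<rho>\<^sup>2 + (M + 2 * R) * \<rho> + \<rho> * A + \<epsilon>"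
      using nsw2 ds2 bil t1 t2 pp_lt sq1 sq2 unfolding ft_def by linarith
    also have "\<dots> < 8 * \<epsilon> + \<rho> * K0"
    proof -
      have m2': "\<rho> * d \<le> \<rho> * M + 2 * (\<rho> * R)" using m2 by (simp add: algebra_simps)
      have t1': "(M + 2 * R) * \<rho> = \<rho> * M + 2 * (\<rho> * R)" by (simp add: algebra_simps)
      have K0e': "\<rho> * K0 = 4 * (\<rho> * M) + 4 * (\<rho> * R) + \<rho>" unfolding K0_def by (simp add: algebra_simps)
      show ?thesis using ftz m1 m2' t1' K0e' \<rho>sq \<rho>0 by linarith
    qed
    finally show ?thesis .
  qed
  have "(SUP x'\<in>W. blinfun_apply (s' - x') (s - w)) \<le> 8 * \<epsilon> + \<rho> * K0 - (norm (s - w))\<^sup>2 / 2 - (infdist s' W)\<^sup>2 / 2"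
    using main by (intro cSUP_least[OF Wne]) (smt (verit))
  then have "(norm (s - w))\<^sup>2 / 2 + (infdist s' W)\<^sup>2 / 2 + (SUP x'\<in>W. blinfun_apply (s' - x') (s - w)) < \<eta>"
    using fin by linarith
  moreover have "(s, s') \<in> G" using aG unfolding s_def s'_def by simp
  ultimately show ?thesis by blast
qed

theorem theorem6p1:
  fixes G :: "('a::banach \<times> ('a \<Rightarrow>\<^sub>L real)) set"
  assumes nonzero: "\<exists>x::'a. x \<noteq> 0"
    and nonempty: "G \<noteq> {}"
    and closed: "closed G"
    and mono: "monotone_graph G"
  shows "quasidense G \<longleftrightarrow>
    (\<forall>w::'a. \<forall>W :: ('a \<Rightarrow>\<^sub>L real) set. \<forall>\<eta>::real.
       W \<noteq> {} \<and> compactin weak_star_topology W \<and> convex W \<and> \<eta> > 0 \<longrightarrow>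
       (\<exists>(s, s') \<in> G.
          (norm (s - w))\<^sup>2 / 2 + (infdist s' W)\<^sup>2 / 2
          + (SUP x' \<in> W. blinfun_apply (s' - x') (s - w)) < \<eta>))"
proof
  assume qd: "quasidense G"
  show "\<forall>w::'a. \<forall>W :: ('a \<Rightarrow>\<^sub>L real) set. \<forall>\<eta>::real.
       W \<noteq> {} \<and> compactin weak_star_topology W \<and> convex W \<and> \<eta> > 0 \<longrightarrow>
       (\<exists>(s, s') \<in> G.
          (norm (s - w))\<^sup>2 / 2 + (infdist s' W)\<^sup>2 / 2
          + (SUP x' \<in> W. blinfun_apply (s' - x') (s - w)) < \<eta>)"
  proof (intro allI impI)
    fix w :: 'a and W :: "('a \<Rightarrow>\<^sub>L real) set" and \<eta> :: real
    assume h: "W \<noteq> {} \<and> compactin weak_star_topology W \<and> convex W \<and> \<eta> > 0"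
    then have "W \<noteq> {}" "compactin weak_star_topology W" "convex W" "\<eta> > 0" by auto
    then show "\<exists>(s, s') \<in> G. (norm (s - w))\<^sup>2 / 2 + (infdist s' W)\<^sup>2 / 2
          + (SUP x' \<in> W. blinfun_apply (s' - x') (s - w)) < \<eta>"
      by (rule dir_a_b[OF qd nonempty mono])
  qed
next
  assume "\<forall>w::'a. \<forall>W :: ('a \<Rightarrow>\<^sub>L real) set. \<forall>\<eta>::real.
       W \<noteq> {} \<and> compactin weak_star_topology W \<and> convex W \<and> \<eta> > 0 \<longrightarrow>
       (\<exists>(s, s') \<in> G.
          (norm (s - w))\<^sup>2 / 2 + (infdist s' W)\<^sup>2 / 2
          + (SUP x' \<in> W. blinfun_apply (s' - x') (s - w)) < \<eta>)"
  then show "quasidense G" by (rule dir_b_a)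
qed

end
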